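(* Let $0<A<1$ and define $g:\mathbb{R}\to\mathbb{R}$ by $g(x)=Ax+\log\big(1+A(e^{-x}-1)\big)$ and $f(x)=g(x)/x^2$ for $x\ne0$. Let $B$ be a nonnegative constant with $B>\log\big(\tfrac{A}{1-A}\big)$. Then for all $0<x\le B$, $$g(x)\ge\min\Big\{\lim_{y\to0}f(y),\,f(B)\Big\}\cdot x^2.$$ *)

theory Defs
  imports "HOL-Analysis.Analysis"
begin

definition gF :: "real \<Rightarrow> real \<Rightarrow> real" where
  "gF A x = A * x + ln (1 + A * (exp (- x) - 1))"

definition fF :: "real \<Rightarrow> real \<Rightarrow> real" where
  "fF A x = gF A x / x\<^sup>2"

end

theory Submission
  imports Defs "HOL-Real_Asymp.Real_Asymp"
begin

lemma qc_aux:
  fixes p q r al be :: real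
  assumes "0 < p" "p < q" "q < r" "0 \<le> al" "0 \<le> be"
  shows "al*q + be/q \<le> max (al*p + be/p) (al*r + be/r)"
proof (rule ccontr)
  assume H: "\<not> ?thesis"
  hence h1: "al*q + be/q > al*p + be/p" and h2: "al*q + be/q > al*r + be/r" by auto
  have "al*q + be/q - (al*p + be/p) = (q-p)*(al*p*q - be)/(p*q)"
    using assms by (simp add: field_simps)
  with h1 have "(q-p)*(al*p*q - be)/(p*q) > 0" by linarith
  moreover have pq: "p*q > 0" using assms by simp
  ultimately have "(q-p)*(al*p*q - be) > 0" by (simp add: zero_less_divide_iff)
  hence "al*p*q - be > 0" using assms by (simp add: zero_less_mult_iff)
  moreover have "al*p*q \<le> al*q*r" using assms
    by (simp add: mult_left_mono mult_right_mono mult.commute mult.left_commute)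
  ultimately have "al*q*r - be > 0" by linarith
  moreover have "al*r + be/r - (al*q + be/q) = (r-q)*(al*q*r - be)/(q*r)"
    using assms by (simp add: field_simps)
  ultimately have "al*r + be/r - (al*q + be/q) > 0" using assms by simp
  with h2 show False by linarith
qed
lemma limF:
  assumes "0 < A" "A < 1"
  shows "((\<lambda>x. (A*x + ln(1 + A*(exp(-x)-1)))/x^2) \<longlongrightarrow> A/2 - A*A/2) (at (0::real))"
  using assms by real_asymp

lemma LimF:
  assumes "0 < A" "A < 1"
  shows "Lim (at 0) (fF A) = A*(1-A)/2"
proof -
  have "fF A = (\<lambda>x. (A*x + ln(1 + A*(exp(-x)-1)))/x^2)"
    by (auto simp: fF_def gF_def)
  moreover have "A/2 - A*A/2 = A*(1-A)/2" by (simp add: algebra_simps diff_divide_distrib)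
  ultimately have "(fF A \<longlongrightarrow> A*(1-A)/2) (at 0)" using limF[OF assms] by metis
  thus ?thesis by (intro tendsto_Lim) auto
qed

theorem lemmaF2:
  fixes A B x :: real
  assumes "0 < A" "A < 1"
    and "0 \<le> B" "B > ln (A / (1 - A))"
    and "0 < x" "x \<le> B"
  shows "gF A x \<ge> min (Lim (at 0) (fF A)) (fF A B) * x\<^sup>2"
proof -
  define c where "c = min (A*(1-A)/2) (fF A B)"
  have Bpos: "B > 0" using assms by linarith
  have gB: "gF A B \<ge> c * B^2"
  proof -
    have "gF A B = fF A B * B^2" using Bpos by (simp add: fF_def)
    moreover have "c \<le> fF A B" by (simp add: c_def)
    ultimately show ?thesis using Bpos by (simp add: mult_right_mono)
  qed
  have main: "gF A x \<ge> c * x^2"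
  proof (cases "x = B")
    case True thus ?thesis using gB by simp
  next
    case False
    hence xB: "x < B" using assms by simp
    define h where "h t = gF A t - c*t^2" for t
    define h1 where "h1 t = A - A*exp(-t)/(1 + A*(exp(-t)-1)) - 2*c*t" for t
    define h2 where "h2 t = A*(1-A)*exp(-t)/(1 + A*(exp(-t)-1))^2 - 2*c" for t
    have pos: "1 + A*(exp(-t)-1) > 0" for t
    proof -
      have "1 + A*(exp(-t)-1) = (1-A) + A*exp(-t)" by (simp add: algebra_simps)
      moreover have "A*exp(-t) > 0" using assms by simp
      ultimately show ?thesis using assms by linarith
    qed
    have D1: "(h has_real_derivative h1 t) (at t)" for t
    proof -
      have "(h has_real_derivative (A + (A*(- exp(-t)))/(1 + A*(exp(-t)-1)) - c*(2*t))) (at t)"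
        unfolding h_def[abs_def] gF_def
        using pos[of t]
        by (auto intro!: derivative_eq_intros)
      moreover have "A + (A*(- exp(-t)))/(1 + A*(exp(-t)-1)) - c*(2*t) = h1 t"
        by (simp add: h1_def algebra_simps)
      ultimately show ?thesis by simp
    qed
    have D2: "(h1 has_real_derivative h2 t) (at t)" for t
    proof -
      have "(h1 has_real_derivative (0 - ((A*(- exp(-t)))*(1 + A*(exp(-t)-1)) - (A*exp(-t))*(A*(-exp(-t))))/(1 + A*(exp(-t)-1))^2 - 2*c)) (at t)"
        unfolding h1_def[abs_def]
        using pos[of t]
        by (auto intro!: derivative_eq_intros simp: power2_eq_square)
      moreover have "(0 - ((A*(- exp(-t)))*(1 + A*(exp(-t)-1)) - (A*exp(-t))*(A*(-exp(-t))))/(1 + A*(exp(-t)-1))^2 - 2*c) = h2 t"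
      proof -
        have "(A*(- exp(-t)))*(1 + A*(exp(-t)-1)) - (A*exp(-t))*(A*(-exp(-t))) = -(A*(1-A)*exp(-t))"
          by (simp add: algebra_simps)
        thus ?thesis unfolding h2_def by simp
      qed
      ultimately show ?thesis by simp
    qed
    have h0: "h 0 = 0" by (simp add: h_def gF_def)
    have h10: "h1 0 = 0" by (simp add: h1_def)
    have h20: "h2 0 \<ge> 0" by (simp add: h2_def c_def)
    define Dn where "Dn u = (1-A)^2*u + A^2/u" for u
    have h2form: "h2 t = A*(1-A)/(Dn (exp t) + 2*A*(1-A)) - 2*c" for t
    proof -
      have e: "exp (-t) = 1/exp t" by (simp add: exp_minus field_simps)
      have "exp t * (1 + A*(exp(-t)-1))^2 = Dn (exp t) + 2*A*(1-A)"
        unfolding Dn_def e by (simp add: field_simps power2_eq_square)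
      moreover have "exp t * (1 + A*(exp(-t)-1))^2 > 0" using pos[of t] by simp
      moreover have "A*(1-A)*exp(-t)/(1 + A*(exp(-t)-1))^2 = A*(1-A)/(exp t * (1 + A*(exp(-t)-1))^2)"
        by (simp add: e)
      ultimately show ?thesis unfolding h2_def by simp
    qed
    have Dnpos: "Dn u > 0" if "u > 0" for u
    proof -
      have "(1-A)^2*u > 0" using assms that by simp
      moreover have "A^2/u \<ge> 0" using that by simp
      ultimately show ?thesis unfolding Dn_def by linarith
    qed
    have QC: "h2 a \<ge> min (h2 0) (h2 b)" if "0 \<le> a" "a < b" for a b
    proof (cases "a = 0")
      case True thus ?thesis by simp
    next
      case False
      hence "0 < a" using that by simp
      hence "exp 0 < exp a" "exp a < exp b" using that by auto
      hence "Dn (exp a) \<le> max (Dn 1) (Dn (exp b))"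
        unfolding Dn_def by (intro qc_aux) auto
      hence "Dn (exp a) \<le> Dn (exp 0) \<or> Dn (exp a) \<le> Dn (exp b)" by auto
      moreover have "A*(1-A)/(Dn (exp a) + 2*A*(1-A)) \<ge> A*(1-A)/(Dn (exp s) + 2*A*(1-A))"
        if "Dn (exp a) \<le> Dn (exp s)" for s
      proof -
        have "2*A*(1-A) > 0" using assms by simp
        hence "Dn (exp a) + 2*A*(1-A) > 0" using Dnpos[of "exp a"] by simp
        moreover have "A*(1-A) \<ge> 0" using assms by simp
        ultimately show ?thesis using that
          by (intro divide_left_mono) (auto intro: mult_pos_pos)
      qed
      ultimately have "A*(1-A)/(Dn (exp a) + 2*A*(1-A)) \<ge> A*(1-A)/(Dn (exp 0) + 2*A*(1-A))
         \<or> A*(1-A)/(Dn (exp a) + 2*A*(1-A)) \<ge> A*(1-A)/(Dn (exp b) + 2*A*(1-A))"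
        by blast
      thus ?thesis unfolding h2form by (auto simp add: min_le_iff_disj)
    qed
    show ?thesis
    proof (rule ccontr)
      assume "\<not> ?thesis"
      hence hx: "h x < 0" by (simp add: h_def)
      have hB: "h B \<ge> 0" using gB by (simp add: h_def)
      obtain \<xi> where \<xi>: "0 < \<xi>" "\<xi> < x" "h x - h 0 = (x - 0) * h1 \<xi>"
        using MVT2[of 0 x h h1] D1 assms by auto
      have "h1 \<xi> < 0" using \<xi> hx h0 assms
        by (metis diff_zero mult_pos_pos not_le order_less_le zero_less_mult_iff mult_nonneg_nonneg less_eq_real_def order.trans)
      obtain \<eta> where \<eta>: "0 < \<eta>" "\<eta> < \<xi>" "h1 \<xi> - h1 0 = (\<xi> - 0) * h2 \<eta>"
        using MVT2[of 0 \<xi> h1 h2] D2 \<xi> by auto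
      have n1: "h2 \<eta> < 0" using \<eta> \<open>h1 \<xi> < 0\<close> h10
        by (simp add: mult_less_0_iff)
      obtain \<zeta> where \<zeta>: "x < \<zeta>" "\<zeta> < B" "h B - h x = (B - x) * h1 \<zeta>"
        using MVT2[of x B h h1] D1 xB by auto
      have "(B - x) * h1 \<zeta> > 0" using \<zeta> hx hB by linarith
      hence "h1 \<zeta> > 0" using \<zeta> by (simp add: zero_less_mult_iff)
      obtain \<theta> where \<theta>: "\<xi> < \<theta>" "\<theta> < \<zeta>" "h1 \<zeta> - h1 \<xi> = (\<zeta> - \<xi>) * h2 \<theta>"
        using MVT2[of \<xi> \<zeta> h1 h2] D2 \<xi> \<zeta> by auto
      have "(\<zeta> - \<xi>) * h2 \<theta> > 0" using \<theta> \<open>h1 \<zeta> > 0\<close> \<open>h1 \<xi> < 0\<close> by linarith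
      hence p1: "h2 \<theta> > 0" using \<theta> by (simp add: zero_less_mult_iff)
      have "h2 \<eta> \<ge> min (h2 0) (h2 \<theta>)" using QC[of \<eta> \<theta>] \<eta> \<theta> by simp
      with h20 p1 n1 show False by linarith
    qed
  qed
  show ?thesis using main unfolding LimF[OF assms(1,2)] c_def .
qed

end
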